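(* For any budget $\Lambda\ge1$, the total cost of all evaluations performed by the Kometo algorithm (described in the context) does not exceed $\Lambda$.
   Context: Setting: $\mathcal{X}$ is a set with a hierarchical partitioning $\mathcal{P}=(\mathcal{P}_{h,i})_{h\ge0,0\le i\le K^h-1}$, $K\ge2$: $\mathcal{P}_{0,0}=\mathcal{X}$ and the $K$ children $\mathcal{P}_{h+1,Ki+l}$ ($0\le l\le K-1$) of $\mathcal{P}_{h,i}$ partition it. Each cell has a fixed representative $x_{h,i}\in\mathcal{P}_{h,i}$. Fidelities $Z=[0,1]$, functions $f_z:\mathcal{X}\to\mathbb{R}$, a known cost function $\lambda:Z\to[0,+\infty]$, and for each $c\ge1$ an available fidelity $z_c$ with $\lambda(z_c)\le c$; evaluating $f_z(x)$ costs $\lambda(z)$. $\log$ is the natural logarithm. Kometo (input $\mathcal{P}$, $\Lambda$, $\lambda$, oracle access to the $f_z$): set $\tilde\Lambda=\left\lfloor\frac{(e-1)\Lambda}{2Ke(\log\Lambda+1)^2}\right\rfloor$ and $j_{\max}=\lfloor\log\tilde\Lambda\rfloor$. "Fidelity level $j$" (integer $j\ge0$) means fidelity $z_{e^j}$. For each cell $(h,i)$ and level $j$ the algorithm keeps a flag $T_{h,i,j}\in\{0,1\}$ (initially $0$) and, when $T_{h,i,j}=1$, the value $f_{h,i,j}=f_{z_{e^j}}(x_{h,i})$. Opening a cell $\mathcal{P}_{h,i}$ at fidelity level $j$ means: for each child $\mathcal{P}_{h+1,i'}$ and each $0\le u\le j$, set $T_{h+1,i',u}=1$, so that $f_{h+1,i',u}=f_{z_{e^u}}(x_{h+1,i'})$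 is evaluated (each (cell, level) value is evaluated at most once). Steps: (1) open the root $\mathcal{P}_{0,0}$ with budget $\tilde\Lambda$ (i.e. at fidelity level $j_{\max}$); (2) exploration: for $h=1,\dots,\lfloor\tilde\Lambda\rfloor$, for $m=1,\dots,\lfloor\tilde\Lambda/h\rfloor$: let $j=\lfloor\log\frac{\tilde\Lambda}{hm}\rfloor$ and open at fidelity level $j$ the not-yet-opened depth-$h$ cell $\mathcal{P}_{h,i}$ with $T_{h,i,j}=1$ having the highest value $f_{h,i,j}$; (3) cross-validation: for $j=0,\dots,j_{\max}$, let $x^c_j$ be the representative $x_{h,i}$ of a cell maximizing $f_{h,i,j}$ over all $(h,i)$ with $T_{h,i,j}=1$, and evaluate $f_{z_{\tilde\Lambda}}(x^c_j)$ (cost at most $\tilde\Lambda$); (4) output $x_\Lambda=\arg\max_{j\in\{0,\dots,j_{\max}\}}f_{z_{\tilde\Lambda}}(x^c_j)$. *)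

theory Defs
  imports Complex_Main "HOL-Library.Extended_Nonnegative_Real"
begin

text \<open>Cells are pairs (h,i) with i < K^h,
  the children of (h,i) are (h+1, K*i+l) for l < K.  A state of the algorithm is a pair
  (T, Opd): T is the set of triples (h,i,u) with flag T_{h,i,u} = 1 (i.e. the value
  f_{z_{e^u}}(x_{h,i}) has been evaluated), Opd is the set of cells opened so far.
  Fidelity levels are integers so that "level -1" (no level at all) is expressible.\<close>

type_synonym kstate = "(nat \<times> nat \<times> nat) set \<times> (nat \<times> nat) set"

definition kometo_Lt :: "nat \<Rightarrow> real \<Rightarrow> nat" where
  "kometo_Lt K Lam = nat \<lfloor>(exp 1 - 1) * Lam / (2 * real K * exp 1 * (ln Lam + 1)^2)\<rfloor>"

text \<open>j_max = floor(log Lt); when Lt = 0 there is no fidelity level (encoded as -1).\<close>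
definition kometo_jmax :: "nat \<Rightarrow> int" where
  "kometo_jmax L = (if L \<ge> 1 then \<lfloor>ln (real L)\<rfloor> else -1)"

definition open_cell :: "nat \<Rightarrow> (nat \<times> nat \<times> nat) set \<Rightarrow> nat \<Rightarrow> nat \<Rightarrow> int
    \<Rightarrow> (nat \<times> nat \<times> nat) set" where
  "open_cell K T h i j = T \<union> {(h + 1, K * i + l, u) | l u. l < K \<and> int u \<le> j}"

definition kometo_schedule :: "nat \<Rightarrow> (nat \<times> nat) list" where
  "kometo_schedule L =
     concat (map (\<lambda>h. map (\<lambda>m. (h, nat \<lfloor>ln (real L / real (h * m))\<rfloor>)) [1..<L div h + 1])
                 [1..<L + 1])"

text \<open>Executions of the exploration phase (any tie-breaking of the argmax is allowed;
  if there is no candidate cell, the step does nothing).\<close>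
inductive kometo_explore ::
  "nat \<Rightarrow> (real \<Rightarrow> 'a \<Rightarrow> real) \<Rightarrow> (real \<Rightarrow> real) \<Rightarrow> (nat \<Rightarrow> nat \<Rightarrow> 'a)
     \<Rightarrow> kstate \<Rightarrow> (nat \<times> nat) list \<Rightarrow> kstate \<Rightarrow> bool"
  for K f z x where
  k_done: "kometo_explore K f z x s [] s"
| k_skip: "\<lbrakk>\<not> (\<exists>i. (h, i) \<notin> Opd \<and> (h, i, j) \<in> T);
          kometo_explore K f z x (T, Opd) rest s'\<rbrakk>
         \<Longrightarrow> kometo_explore K f z x (T, Opd) ((h, j) # rest) s'"
| k_open: "\<lbrakk>(h, i) \<notin> Opd; (h, i, j) \<in> T;
         \<forall>i'. (h, i') \<notin> Opd \<and> (h, i', j) \<in> T \<longrightarrow> f (z (exp (real j))) (x h i') \<le> f (z (exp (real j))) (x h i);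
         kometo_explore K f z x (open_cell K T h i (int j), insert (h, i) Opd) rest s'\<rbrakk>
        \<Longrightarrow> kometo_explore K f z x (T, Opd) ((h, j) # rest) s'"

text \<open>Total cost: every evaluated (cell, level) value f_{z_{e^u}}(x_{h,i}) costs lam(z_{e^u})
  (each evaluated once), plus one evaluation at fidelity z_{Lt} for each cross-validation
  level j = 0..j_max.\<close>
definition kometo_cost :: "(real \<Rightarrow> ennreal) \<Rightarrow> (real \<Rightarrow> real) \<Rightarrow> nat
    \<Rightarrow> (nat \<times> nat \<times> nat) set \<Rightarrow> ennreal" where
  "kometo_cost lam z L T =
     (\<Sum>(h, i, u) \<in> T. lam (z (exp (real u)))) + of_nat (nat (kometo_jmax L + 1)) * lam (z (real L))"

end

theory Submission imports Defs begin

definition wt :: "(nat \<times> nat \<times> nat) set \<Rightarrow> real" where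
  "wt T = (\<Sum>(h,i,u)\<in>T. exp (real u))"
definition Sg :: "nat \<Rightarrow> real" where "Sg j = (\<Sum>u\<le>j. exp (real u))"

lemma Sg_eq: "(exp 1 - 1) * Sg j = exp (real j + 1) - 1"
proof (induction j)
  case 0 then show ?case by (simp add: Sg_def)
next
  case (Suc j)
  have e: "exp (real (Suc j) + 1) = exp 1 * exp (real j + 1)"
    by (simp add: exp_add[symmetric] add.commute)
  have "Sg (Suc j) = Sg j + exp (real j + 1)" by (simp add: Sg_def add.commute)
  then have "(exp 1 - 1) * Sg (Suc j) = (exp 1 - 1) * Sg j + (exp 1 - 1) * exp (real j + 1)"
    by (simp add: algebra_simps)
  also have "\<dots> = exp (real (Suc j) + 1) - 1" using Suc e by (simp add: algebra_simps)
  finally show ?case .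
qed

lemma Sg_le: "Sg j \<le> exp 1 / (exp 1 - 1) * exp (real j)"
proof -
  have e1: "exp 1 - 1 > (0::real)" by simp
  have "Sg j = (exp (real j + 1) - 1) / (exp 1 - 1)" using Sg_eq[of j] e1
    by (simp add: field_simps)
  also have "\<dots> \<le> exp (real j + 1) / (exp 1 - 1)" using e1 by (simp add: divide_right_mono)
  also have "\<dots> = exp 1 / (exp 1 - 1) * exp (real j)" by (simp add: exp_add field_simps)
  finally show ?thesis .
qed

lemma Sg_nonneg: "Sg j \<ge> 0" unfolding Sg_def by (simp add: sum_nonneg)

lemma open_cell_eq: "open_cell K T h i (int j) = T \<union> (\<lambda>(l,u). (h+1, K*i+l, u)) ` ({..<K} \<times> {..j})"
  unfolding open_cell_def by auto

lemma wt_open: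
  assumes "finite T"
  shows "finite (open_cell K T h i (int j)) \<and> wt (open_cell K T h i (int j)) \<le> wt T + real K * Sg j"
proof -
  let ?g = "\<lambda>(l::nat,u::nat). (h+1, K*i+l, u)"
  let ?A = "?g ` ({..<K} \<times> {..j})"
  have fA: "finite ?A" by simp
  have "wt (T \<union> ?A) \<le> wt T + wt ?A"
    unfolding wt_def using assms fA
    by (simp add: sum_Un case_prod_beta sum_nonneg)
  moreover have "wt ?A \<le> (\<Sum>p\<in>{..<K} \<times> {..j}. exp (real (snd p)))"
    unfolding wt_def
    by (rule order_trans[OF sum_image_le]) (auto simp: case_prod_beta)
  moreover have "(\<Sum>p\<in>{..<K} \<times> {..j}. exp (real (snd p))) = real K * Sg j"
  proof -
    have "(\<Sum>p\<in>{..<K} \<times> {..j}. exp (real (snd p))) = (\<Sum>l<K. \<Sum>u\<le>j. exp (real u))"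
      by (simp add: sum.cartesian_product')
    then show ?thesis by (simp add: Sg_def)
  qed
  ultimately show ?thesis using assms by (simp add: open_cell_eq)
qed

lemma explore_bound:
  assumes "kometo_explore K f z x s sched s'" "finite (fst s)"
  shows "finite (fst s') \<and> wt (fst s') \<le> wt (fst s) + (\<Sum>(h,j)\<leftarrow>sched. real K * Sg j)"
  using assms
proof (induction rule: kometo_explore.induct)
  case (k_done s) then show ?case by simp
next
  case (k_skip h Opd j T rest s') then show ?case
  proof -
    have "0 \<le> real K * Sg j" using Sg_nonneg[of j] by simp
    then show ?thesis using k_skip by auto
  qed
next
  case (k_open h i Opd j T rest s')
  have w: "finite (open_cell K T h i (int j)) \<and> wt (open_cell K T h i (int j)) \<le> wt T + real K * Sg j"
    using wt_open k_open.prems by simp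
  then show ?case using k_open.IH by auto
qed

lemma harm_le: "n \<ge> 1 \<Longrightarrow> (\<Sum>m=1..n. 1 / real m) \<le> ln (real n) + 1"
proof (induction n rule: dec_induct)
  case base then show ?case by simp
next
  case (step n)
  have "ln (real n / real (Suc n)) \<le> real n / real (Suc n) - 1"
    using step by (intro ln_le_minus_one) auto
  also have "\<dots> = - 1 / real (Suc n)" by (simp add: field_simps)
  finally have "1 / real (Suc n) \<le> ln (real (Suc n)) - ln (real n)"
    using step by (simp add: ln_div)
  then show ?case using step by (simp add: sum.cl_ivl_Suc)
qed

lemma sum_list_concat_map:
  "sum_list (map g (concat xss)) = sum_list (map (\<lambda>xs. sum_list (map g xs)) xss)"
  by (induction xss) auto

lemma sum_list_upt_conv: "sum_list (map F [a..<b]) = sum F {a..<b}"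
  by (metis sum_set_upt_conv_sum_list_nat set_upt)

lemma exp_floor_le:
  assumes "y \<ge> 1"
  shows "exp (real (nat \<lfloor>ln y\<rfloor>)) \<le> y"
proof -
  have "ln y \<ge> 0" using assms by simp
  then have "real (nat \<lfloor>ln y\<rfloor>) = of_int \<lfloor>ln y\<rfloor>" by simp
  also have "\<dots> \<le> ln y" by simp
  finally have "exp (real (nat \<lfloor>ln y\<rfloor>)) \<le> exp (ln y)" by simp
  then show ?thesis using assms by simp
qed

lemma sched_sum:
  assumes L1: "L \<ge> 1"
  shows "(\<Sum>(h,j)\<leftarrow>kometo_schedule L. real K * Sg j)
           \<le> real K * (exp 1 / (exp 1 - 1)) * real L * (ln (real L) + 1)^2"
proof -
  define c :: real where "c = exp 1 / (exp 1 - 1)"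
  have c0: "c \<ge> 0" unfolding c_def by (simp add: less_imp_le)
  have lnL: "ln (real L) \<ge> 0" using L1 by simp
  have eq: "(\<Sum>(h,j)\<leftarrow>kometo_schedule L. real K * Sg j) =
     (\<Sum>h\<in>{1..<L+1}. \<Sum>m\<in>{1..<L div h + 1}. real K * Sg (nat \<lfloor>ln (real L / real (h*m))\<rfloor>))"
    unfolding kometo_schedule_def sum_list_concat_map map_map o_def prod.case sum_list_upt_conv
    by (simp only: mult.commute)
  have termb: "real K * Sg (nat \<lfloor>ln (real L / real (h*m))\<rfloor>)
       \<le> real K * c * real L * (1 / real h) * (1 / real m)"
    if h: "h \<in> {1..<L+1}" and m: "m \<in> {1..<L div h + 1}" for h m
  proof -
    have h1: "h \<ge> 1" and m1: "m \<ge> 1" and mh: "m \<le> L div h" using h m by auto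
    have "m * h \<le> L div h * h" using mh by simp
    also have "\<dots> \<le> L" by simp
    finally have hmL: "h * m \<le> L" by (simp add: mult.commute)
    have hm1: "h * m \<ge> 1" using h1 m1 by simp
    define y where "y = real L / real (h*m)"
    have y1: "y \<ge> 1" unfolding y_def using hmL hm1
      by (simp add: field_simps del: of_nat_mult)
    have "Sg (nat \<lfloor>ln y\<rfloor>) \<le> c * exp (real (nat \<lfloor>ln y\<rfloor>))" using Sg_le c_def by simp
    also have "\<dots> \<le> c * y" using exp_floor_le[OF y1] c0 by (simp add: mult_left_mono)
    finally have "real K * Sg (nat \<lfloor>ln y\<rfloor>) \<le> real K * (c * y)" by (simp add: mult_left_mono)
    also have "real K * (c * y) = real K * c * real L * (1 / real h) * (1 / real m)"
      unfolding y_def by (simp add: field_simps)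
    finally show ?thesis unfolding y_def .
  qed
  have inner: "(\<Sum>m\<in>{1..<L div h + 1}. 1 / real m) \<le> ln (real L) + 1" for h
  proof (cases "L div h = 0")
    case True then show ?thesis using lnL by simp
  next
    case False
    have "{1..<L div h + 1} = {1..L div h}" by auto
    then have "(\<Sum>m\<in>{1..<L div h + 1}. 1 / real m) \<le> ln (real (L div h)) + 1"
      using harm_le[of "L div h"] False by simp
    also have "\<dots> \<le> ln (real L) + 1"
    proof -
      have "real (L div h) \<le> real L" by (simp add: div_le_dividend)
      moreover have "real (L div h) > 0" using False by simp
      ultimately have "ln (real (L div h)) \<le> ln (real L)"
        using ln_le_cancel_iff by (metis less_le_trans)
      then show ?thesis by simp
    qed
    finally show ?thesis .
  qed
  have "(\<Sum>(h,j)\<leftarrow>kometo_schedule L. real K * Sg j) \<le>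
     (\<Sum>h\<in>{1..<L+1}. \<Sum>m\<in>{1..<L div h + 1}. real K * c * real L * (1 / real h) * (1 / real m))"
    unfolding eq by (intro sum_mono termb) auto
  also have "\<dots> = (\<Sum>h\<in>{1..<L+1}. real K * c * real L * (1 / real h) * (\<Sum>m\<in>{1..<L div h + 1}. 1 / real m))"
    by (simp only: sum_distrib_left)
  also have "\<dots> \<le> (\<Sum>h\<in>{1..<L+1}. real K * c * real L * (1 / real h) * (ln (real L) + 1))"
    using inner c0 by (intro sum_mono mult_left_mono) auto
  also have "\<dots> = real K * c * real L * (ln (real L) + 1) * (\<Sum>h\<in>{1..<L+1}. 1 / real h)"
    by (simp only: sum_distrib_left) (simp add: mult_ac)
  also have "\<dots> \<le> real K * c * real L * (ln (real L) + 1) * (ln (real L) + 1)"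
  proof -
    have "{1..<L+1} = {1..L}" by auto
    then have "(\<Sum>h\<in>{1..<L+1}. 1 / real h) \<le> ln (real L) + 1" using harm_le[OF L1] by simp
    then show ?thesis using c0 lnL by (intro mult_left_mono) auto
  qed
  finally show ?thesis by (simp add: c_def power2_eq_square mult_ac)
qed

lemma arith_final:
  fixes Lam Lr Kr n :: real
  assumes K2: "Kr \<ge> 2" and L1: "Lr \<ge> 1" and Lam1: "Lam \<ge> 1"
    and Lle: "Lr \<le> (exp 1 - 1) * Lam / (2 * Kr * exp 1 * (ln Lam + 1)^2)"
    and nle: "n \<le> ln Lr + 1"
  shows "Kr * (exp 1 / (exp 1 - 1)) * Lr + Kr * (exp 1 / (exp 1 - 1)) * Lr * (ln Lr + 1)^2 + n * Lr \<le> Lam"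
proof -
  define e :: real where "e = exp 1"
  define a where "a = ln Lam + 1"
  define b where "b = ln Lr + 1"
  define Q where "Q = Kr * (e / (e - 1)) * Lr"
  have e1: "e > 1" unfolding e_def by simp
  have e3: "e \<le> 3" unfolding e_def using exp_le by simp
  have a1: "a \<ge> 1" unfolding a_def using Lam1 by simp
  have b1: "b \<ge> 1" unfolding b_def using L1 by simp
  have a2pos: "a^2 > 0" using a1 by simp
  have a2ge1: "a^2 \<ge> 1" using a1 by (simp add: one_le_power)
  have Lle': "Lr \<le> (e - 1) * Lam / (2 * Kr * e * a^2)" using Lle unfolding e_def a_def .
  have D: "2 * Kr * e * a^2 > 0" using e1 K2 a2pos by simp
  have Q2: "Q * (2 * a^2) \<le> Lam"
  proof -
    have "Lr * (2 * Kr * e * a^2) \<le> (e - 1) * Lam"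
      using Lle' D by (simp add: pos_le_divide_eq)
    then have "Lr * (2 * Kr * e * a^2) / (e - 1) \<le> Lam"
      using e1 by (simp add: pos_divide_le_eq mult.commute)
    moreover have "Q * (2 * a^2) = Lr * (2 * Kr * e * a^2) / (e - 1)" unfolding Q_def
      by (simp add: mult_ac)
    ultimately show ?thesis by simp
  qed
  have L4: "Lr * (4 * a^2) \<le> Lam"
  proof -
    have ke: "Kr * e \<ge> 2 * e" using e1 K2 by (simp add: mult_right_mono)
    have f: "(e - 1) / (2 * Kr * e) \<le> 1 / 4"
    proof (subst pos_divide_le_eq)
      show "0 < 2 * Kr * e" using e1 K2 by simp
      show "e - 1 \<le> 1 / 4 * (2 * Kr * e)" using ke e1 by linarith
    qed
    have "(e - 1) * Lam / (2 * Kr * e * a^2) = ((e - 1) / (2 * Kr * e)) * (Lam / a^2)"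
      by simp
    also have "\<dots> \<le> 1 / 4 * (Lam / a^2)"
      using f Lam1 a2pos by (intro mult_right_mono) auto
    also have "\<dots> = Lam / (4 * a^2)" by simp
    finally have "Lr \<le> Lam / (4 * a^2)" using Lle' by linarith
    then show ?thesis using a2pos by (simp add: pos_le_divide_eq)
  qed
  have Lam4: "Lam \<ge> 4"
  proof -
    have "4 \<le> 4 * a^2" using a2ge1 by simp
    from mult_mono[OF L1 this] have "1 * 4 \<le> Lr * (4 * a^2)" using L1 by simp
    then show ?thesis using L4 by linarith
  qed
  have a2: "a \<ge> 2"
  proof -
    have "ln Lam \<ge> ln e" using Lam4 e3 e1 by (subst ln_le_cancel_iff) auto
    then show ?thesis unfolding a_def e_def by simp
  qed
  have LrLam: "Lr \<le> Lam"
  proof -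
    have "Lr * 1 \<le> Lr * (4 * a^2)" using L1 a2ge1 by (intro mult_left_mono) auto
    then show ?thesis using L4 by simp
  qed
  have ba: "b \<le> a" unfolding a_def b_def using LrLam L1 by (simp add: ln_le_cancel_iff)
  have t3: "n * Lr \<le> Lam / 8"
  proof -
    have "n * Lr \<le> b * Lr" using nle L1 unfolding b_def by (simp add: mult_right_mono)
    also have "\<dots> \<le> a * Lr" using ba L1 by (simp add: mult_right_mono)
    also have "\<dots> \<le> Lam / (4 * a)"
    proof -
      have "a * Lr * (4 * a) = Lr * (4 * a^2)" by (simp add: power2_eq_square mult_ac)
      then have "a * Lr * (4 * a) \<le> Lam" using L4 by linarith
      then show ?thesis using a1 by (simp add: pos_le_divide_eq)
    qed
    also have "\<dots> \<le> Lam / 8" using a2 Lam1 by (intro divide_left_mono) auto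
    finally show ?thesis .
  qed
  have Q0: "Q \<ge> 0" unfolding Q_def using e1 K2 L1 by simp
  have t12: "Q + Q * b^2 \<le> Lam / 8 + Lam / 2"
  proof -
    have "Q * b^2 \<le> Q * a^2" using Q0 ba b1 by (intro mult_left_mono power_mono) auto
    moreover have "Q * a^2 \<le> Lam / 2" using Q2 by simp
    moreover have "Q \<le> Lam / 8"
    proof -
      have "2 * 2 \<le> a^2" using a2 power_mono[OF a2, of 2] by (simp add: power2_eq_square)
      then have "Q * 8 \<le> Q * (2 * a^2)" using Q0 by (intro mult_left_mono) auto
      then show ?thesis using Q2 by simp
    qed
    ultimately show ?thesis by linarith
  qed
  have "Q + Q * b^2 + n * Lr \<le> Lam" using t12 t3 Lam1 by linarith
  then show ?thesis unfolding Q_def b_def e_def .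
qed

theorem proposition2:
  fixes X :: "'a set" and P :: "nat \<Rightarrow> nat \<Rightarrow> 'a set" and x :: "nat \<Rightarrow> nat \<Rightarrow> 'a"
    and K :: nat and f :: "real \<Rightarrow> 'a \<Rightarrow> real" and lam :: "real \<Rightarrow> ennreal"
    and z :: "real \<Rightarrow> real" and Lam :: real
    and T :: "(nat \<times> nat \<times> nat) set" and Opd :: "(nat \<times> nat) set"
  assumes K2: "K \<ge> 2"
    and root: "P 0 0 = X"
    and part_union: "\<And>h i. i < K ^ h \<Longrightarrow> (\<Union>l<K. P (h + 1) (K * i + l)) = P h i"
    and part_disj: "\<And>h i l l'. i < K ^ h \<Longrightarrow> l < K \<Longrightarrow> l' < K \<Longrightarrow> l \<noteq> l'
                      \<Longrightarrow> P (h + 1) (K * i + l) \<inter> P (h + 1) (K * i + l') = {}"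
    and reps: "\<And>h i. i < K ^ h \<Longrightarrow> x h i \<in> P h i"
    and fid: "\<And>c. c \<ge> 1 \<Longrightarrow> z c \<in> {0..1} \<and> lam (z c) \<le> ennreal c"
    and budget: "Lam \<ge> 1"
    and run: "kometo_explore K f z x
                (open_cell K {} 0 0 (kometo_jmax (kometo_Lt K Lam)), {(0, 0)})
                (kometo_schedule (kometo_Lt K Lam)) (T, Opd)"
  shows "kometo_cost lam z (kometo_Lt K Lam) T \<le> ennreal Lam"
proof -
  define L where "L = kometo_Lt K Lam"
  define n where "n = nat (kometo_jmax L + 1)"
  define T0 where "T0 = open_cell K {} 0 0 (kometo_jmax L)"
  have run': "kometo_explore K f z x (T0, {(0, 0)}) (kometo_schedule L) (T, Opd)"
    using run unfolding T0_def L_def .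
  have wT0: "wt T \<ge> 0" unfolding wt_def by (simp add: sum_nonneg case_prod_beta)
  have c1: "(\<Sum>(h, i, u)\<in>T. lam (z (exp (real u)))) \<le> ennreal (wt T)"
  proof -
    have "(\<Sum>(h, i, u)\<in>T. lam (z (exp (real u)))) \<le> (\<Sum>p\<in>T. ennreal (exp (real (snd (snd p)))))"
      unfolding case_prod_beta
      by (rule sum_mono) (use fid in auto)
    also have "\<dots> = ennreal (wt T)" unfolding wt_def case_prod_beta
      by (rule sum_ennreal) simp
    finally show ?thesis .
  qed
  have main: "wt T + real n * real L \<le> Lam"
  proof (cases "L = 0")
    case True
    have j: "kometo_jmax L = -1" using True by (simp add: kometo_jmax_def)
    have "T0 = {}" unfolding T0_def j open_cell_def by auto
    moreover have "kometo_schedule L = []" using True by (simp add: kometo_schedule_def)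
    ultimately have "wt T \<le> 0" using explore_bound[OF run'] by (simp add: wt_def)
    then show ?thesis using True budget by simp
  next
    case False
    then have L1: "L \<ge> 1" by simp
    define j0 where "j0 = nat \<lfloor>ln (real L)\<rfloor>"
    have lnL: "ln (real L) \<ge> 0" using L1 by simp
    have jm: "kometo_jmax L = int j0" using L1 lnL by (simp add: kometo_jmax_def j0_def)
    have T0f: "finite T0 \<and> wt T0 \<le> wt {} + real K * Sg j0"
      unfolding T0_def jm by (rule wt_open) simp
    have "Sg j0 \<le> exp 1 / (exp 1 - 1) * exp (real j0)" by (rule Sg_le)
    also have "\<dots> \<le> exp 1 / (exp 1 - 1) * real L"
      using exp_floor_le[of "real L"] L1 unfolding j0_def
      by (intro mult_left_mono) (auto simp: less_imp_le)
    finally have "real K * Sg j0 \<le> real K * (exp 1 / (exp 1 - 1) * real L)"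
      by (rule mult_left_mono) simp
    then have S0: "real K * Sg j0 \<le> real K * (exp 1 / (exp 1 - 1)) * real L"
      by (simp only: mult.assoc)
    have eb: "wt T \<le> wt T0 + (\<Sum>(h,j)\<leftarrow>kometo_schedule L. real K * Sg j)"
      using explore_bound[OF run'] T0f by simp
    have wT: "wt T \<le> real K * (exp 1 / (exp 1 - 1)) * real L
        + real K * (exp 1 / (exp 1 - 1)) * real L * (ln (real L) + 1)^2"
      using eb T0f S0 sched_sum[OF L1, of K] by (simp add: wt_def)
    have nle: "real n \<le> ln (real L) + 1"
    proof -
      have "real n = of_int (\<lfloor>ln (real L)\<rfloor> + 1)"
        unfolding n_def jm j0_def using lnL by simp
      also have "\<dots> \<le> ln (real L) + 1" by simp
      finally show ?thesis .
    qed
    define r where "r = (exp 1 - 1) * Lam / (2 * real K * exp 1 * (ln Lam + 1)^2)"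
    have Lr: "real L \<le> r"
    proof -
      have "L = nat \<lfloor>r\<rfloor>" unfolding L_def r_def kometo_Lt_def ..
      then show ?thesis using L1 by linarith
    qed
    have K2': "real K \<ge> 2" using K2 by simp
    have "real K * (exp 1 / (exp 1 - 1)) * real L
        + real K * (exp 1 / (exp 1 - 1)) * real L * (ln (real L) + 1)^2 + real n * real L \<le> Lam"
      by (rule arith_final[OF K2' _ budget _ nle]) (use L1 Lr r_def in auto)
    then show ?thesis using wT by linarith
  qed
  have c2: "of_nat n * lam (z (real L)) \<le> ennreal (real n * real L)"
  proof (cases "L = 0")
    case True
    then have "n = 0" by (simp add: n_def kometo_jmax_def)
    then show ?thesis by simp
  next
    case False
    then have "lam (z (real L)) \<le> ennreal (real L)" using fid[of "real L"] by simp
    then have "of_nat n * lam (z (real L)) \<le> of_nat n * ennreal (real L)"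
      by (rule mult_left_mono) simp
    also have "\<dots> = ennreal (real n * real L)"
      by (simp add: ennreal_of_nat_eq_real_of_nat ennreal_mult)
    finally show ?thesis .
  qed
  have "kometo_cost lam z L T \<le> ennreal (wt T) + ennreal (real n * real L)"
    unfolding kometo_cost_def n_def[symmetric] using c1 c2 by (rule add_mono)
  also have "\<dots> = ennreal (wt T + real n * real L)" using wT0 by (simp add: ennreal_plus)
  also have "\<dots> \<le> ennreal Lam" using main by (rule ennreal_leI)
  finally show ?thesis unfolding L_def .
qed

end
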